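(* Consider the system $\Sigma$, let $d:=\dim\ker D$, and suppose $\dim\mathcal{U}_{\rm imp}=f$ (where $f\ge 1$). Let $N$ be a matrix whose columns form a basis of $\ker\mathcal{M}_{f-d+1}$. Then: 1. $\mathcal{R}_s=\operatorname{img}\big(\begin{bmatrix}B&AB&\cdots&A^{f-d}B\end{bmatrix}N\big)$; 2. $\dim\mathcal{R}_s=f$.
   Context: $\Sigma$ is the system $\dot x=Ax+Bu$, $y=Cx+Du$ with $A\in\mathbb{R}^{n\times n}$, $B\in\mathbb{R}^{n\times m}$, $C\in\mathbb{R}^{p\times n}$, $D\in\mathbb{R}^{p\times m}$, transfer matrix $G(s)=C(sI_n-A)^{-1}B+D$. Impulsive-smooth inputs are distributions $u=u_{\rm reg}+\sum_{i=0}^k a_i\delta^{(i)}$ with $u_{\rm reg}$ the restriction to $\mathbb{R}_+$ of a $C^\infty(\mathbb{R},\mathbb{R}^m)$ function and $a_i\in\mathbb{R}^m$. A state $x_1\in\mathbb{R}^n$ is strongly reachable if there is an impulsive-smooth input $u$ such that the state trajectory from $x(0^-)=0$ satisfies $x(0^+)=x_1$ and the output is impulse-free (restriction to $\mathbb{R}_+$ of a $C^\infty$ function); the set of such states is the strongly reachable subspace $\mathcal{R}_s$. It is known (Hautus–Silverman) that $\mathcal{R}_s$ equals the stationary value of the nondecreasing sequence $\mathcal{R}_0=\{0\}$, $\mathcal{R}_{i+1}=\{Aw+B\alpha : w\in\mathcal{R}_i,\ \alpha\in\mathbb{R}^m,\ Cw+D\alpha=0\}$ (if $\mathcal{R}_{i+1}=\mathcal{R}_i$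 then $\mathcal{R}_s=\mathcal{R}_i$). An input $\sum_{i=0}^k u_i\delta^{(i)}$ ($u_i\in\mathbb{R}^m$) is an admissible impulsive input if the output from zero initial state is impulse-free, equivalently $G(s)\sum_i u_is^i$ is strictly proper; these form the vector space $\mathcal{U}_{\rm imp}$. For $k\ge1$, $\mathcal{M}_k$ is the $k\times k$ block matrix (blocks $p\times m$) whose $(i,j)$ block is $0$ if $i+j\le k$, $D$ if $i+j=k+1$, and $CA^{i+j-k-2}B$ if $i+j\ge k+2$ (so $\mathcal{M}_1=D$). *)

theory Defs
  imports "HOL-Analysis.Analysis" "HOL-Library.Function_Algebras"
begin

primrec mpow :: "real^'n^'n \<Rightarrow> nat \<Rightarrow> real^'n^'n" where
  "mpow A 0 = mat 1"
| "mpow A (Suc j) = A ** mpow A j"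

primrec Rseq :: "real^'n^'n \<Rightarrow> real^'m^'n \<Rightarrow> real^'n^'p \<Rightarrow> real^'m^'p \<Rightarrow> nat \<Rightarrow> (real^'n) set" where
  "Rseq A B C D 0 = {0}"
| "Rseq A B C D (Suc i) =
     {A *v w + B *v \<alpha> | w \<alpha>. w \<in> Rseq A B C D i \<and> C *v w + D *v \<alpha> = 0}"

definition Rs :: "real^'n^'n \<Rightarrow> real^'m^'n \<Rightarrow> real^'n^'p \<Rightarrow> real^'m^'p \<Rightarrow> (real^'n) set" where
  "Rs A B C D = Rseq A B C D (LEAST i. Rseq A B C D (Suc i) = Rseq A B C D i)"

text \<open>Markov parameters: G(s) = D + sum_(l>=0) C A^l B s^(-l-1) = sum_l markov l s^(-l).\<close>
definition markov :: "real^'n^'n \<Rightarrow> real^'m^'n \<Rightarrow> real^'n^'p \<Rightarrow> real^'m^'p \<Rightarrow> nat \<Rightarrow> real^'m^'p" where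
  "markov A B C D l = (if l = 0 then D else C ** mpow A (l - 1) ** B)"

text \<open>An impulsive input sum_i u_i delta^(i) is represented by its coefficient sequence
  u :: nat => R^m with finite support. It is admissible iff G(s) sum_i u_i s^i is strictly
  proper, i.e. the coefficient of s^j vanishes for every j >= 0 in the expansion
  G(s) u(s) = sum_j (sum_(i>=j) markov (i-j) u_i) s^j + (strictly proper part).\<close>
definition Uimp :: "real^'n^'n \<Rightarrow> real^'m^'n \<Rightarrow> real^'n^'p \<Rightarrow> real^'m^'p \<Rightarrow> (nat \<Rightarrow> real^'m) set" where
  "Uimp A B C D = {u. finite {i. u i \<noteq> 0} \<and>
     (\<forall>j. (\<Sum>i\<in>{i. j \<le> i \<and> u i \<noteq> 0}. markov A B C D (i - j) *v u i) = 0)}"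

definition sscale :: "real \<Rightarrow> (nat \<Rightarrow> real^'m) \<Rightarrow> (nat \<Rightarrow> real^'m)" where
  "sscale c u = (\<lambda>i. c *\<^sub>R u i)"

definition Mblk :: "real^'n^'n \<Rightarrow> real^'m^'n \<Rightarrow> real^'n^'p \<Rightarrow> real^'m^'p \<Rightarrow> nat \<Rightarrow> nat \<Rightarrow> nat \<Rightarrow> real^'m^'p" where
  "Mblk A B C D k i j =
     (if i + j \<le> k then 0 else if i + j = k + 1 then D else C ** mpow A (i + j - k - 2) ** B)"

text \<open>Kernel of M_k: block vectors (v_1,...,v_k) in (R^m)^k, represented as sequences
  v :: nat => R^m vanishing outside {1..k}.\<close>
definition kerM :: "real^'n^'n \<Rightarrow> real^'m^'n \<Rightarrow> real^'n^'p \<Rightarrow> real^'m^'p \<Rightarrow> nat \<Rightarrow> (nat \<Rightarrow> real^'m) set" where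
  "kerM A B C D k = {v. (\<forall>i. i \<notin> {1..k} \<longrightarrow> v i = 0) \<and>
     (\<forall>i\<in>{1..k}. (\<Sum>j=1..k. Mblk A B C D k i j *v v j) = 0)}"

definition ctrl :: "real^'n^'n \<Rightarrow> real^'m^'n \<Rightarrow> nat \<Rightarrow> (nat \<Rightarrow> real^'m) \<Rightarrow> real^'n" where
  "ctrl A B k v = (\<Sum>j=1..k. (mpow A (j - 1) ** B) *v v j)"

end

theory Submission
  imports Defs
begin

lemma sum_fun_apply: "(\<Sum>k\<in>S. F k) i = (\<Sum>k\<in>S. F k i)"
  by (induction S rule: infinite_finite_induct) auto

lemma vs_sscale: "vector_space (sscale :: real \<Rightarrow> (nat \<Rightarrow> real^'m) \<Rightarrow> _)"
  by unfold_locales (auto simp: sscale_def fun_eq_iff algebra_simps)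

interpretation sv: vector_space "sscale :: real \<Rightarrow> (nat \<Rightarrow> real^'m) \<Rightarrow> _"
  by (rule vs_sscale)

definition bnd :: "(nat \<Rightarrow> 'a::zero) \<Rightarrow> nat \<Rightarrow> bool" where
  "bnd u K \<longleftrightarrow> (\<forall>i\<ge>K. u i = 0)"

definition coefK where
  "coefK A B C D K u j = (\<Sum>l<K. markov A B C D l *v u (j + l))"

definition PhiK where
  "PhiK A B K u = (\<Sum>l<K. (mpow A l ** B) *v u l)"

definition cns :: "'a \<Rightarrow> (nat \<Rightarrow> 'a) \<Rightarrow> nat \<Rightarrow> 'a" where
  "cns a u i = (if i = 0 then a else u (i - 1))"

lemma Uimp_iff:
  assumes "bnd u K"
  shows "u \<in> Uimp A B C D \<longleftrightarrow> (\<forall>j. coefK A B C D K u j = 0)"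
proof -
  have fin: "finite {i. u i \<noteq> 0}"
    using assms unfolding bnd_def
    by (metis (mono_tags, lifting) finite_lessThan finite_subset lessThan_iff mem_Collect_eq not_le subsetI)
  have eq: "(\<Sum>i\<in>{i. j \<le> i \<and> u i \<noteq> 0}. markov A B C D (i - j) *v u i) = coefK A B C D K u j" for j
  proof -
    have "coefK A B C D K u j = (\<Sum>i\<in>(\<lambda>l. j + l) ` {..<K}. markov A B C D (i - j) *v u i)"
      unfolding coefK_def by (subst sum.reindex) (auto simp: inj_on_def)
    also have "\<dots> = (\<Sum>i\<in>{i. j \<le> i \<and> u i \<noteq> 0}. markov A B C D (i - j) *v u i)"
    proof (rule sum.mono_neutral_right)
      show "finite ((\<lambda>l. j + l) ` {..<K})" by simp
      show "{i. j \<le> i \<and> u i \<noteq> 0} \<subseteq> (\<lambda>l. j + l) ` {..<K}"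
      proof
        fix i assume "i \<in> {i. j \<le> i \<and> u i \<noteq> 0}"
        then have "j \<le> i" "i < K" using assms unfolding bnd_def by (auto simp: not_le[symmetric])
        then show "i \<in> (\<lambda>l. j + l) ` {..<K}" by (intro image_eqI[of _ _ "i - j"]) auto
      qed
      show "\<forall>i\<in>(\<lambda>l. j + l) ` {..<K} - {i. j \<le> i \<and> u i \<noteq> 0}. markov A B C D (i - j) *v u i = 0"
        by auto
    qed
    finally show ?thesis by simp
  qed
  show ?thesis unfolding Uimp_def using fin eq by auto
qed

lemma coefK_mono:
  assumes "bnd u K" "K \<le> K'"
  shows "coefK A B C D K' u j = coefK A B C D K u j"
  unfolding coefK_def
  by (rule sum.mono_neutral_right) (use assms in \<open>auto simp: bnd_def\<close>)

lemma PhiK_mono: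
  assumes "bnd u K" "K \<le> K'"
  shows "PhiK A B K' u = PhiK A B K u"
  unfolding PhiK_def
  by (rule sum.mono_neutral_right) (use assms in \<open>auto simp: bnd_def\<close>)

lemma bnd_mono: "bnd u K \<Longrightarrow> K \<le> K' \<Longrightarrow> bnd u K'"
  by (auto simp: bnd_def)

lemma bnd_cns: "bnd u K \<Longrightarrow> bnd (cns a u) (Suc K)"
  by (auto simp: bnd_def cns_def)

lemma mv_sum: "(M :: real^'a^'b) *v (\<Sum>l\<in>S. g l) = (\<Sum>l\<in>S. M *v g l)"
  by (induction S rule: infinite_finite_induct) (auto simp: matrix_vector_right_distrib)

lemma PhiK_cns: "PhiK A B (Suc K) (cns a u) = B *v a + A *v PhiK A B K u"
proof -
  have "PhiK A B (Suc K) (cns a u) = (mpow A 0 ** B) *v a + (\<Sum>l<K. (mpow A (Suc l) ** B) *v u l)"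
    unfolding PhiK_def by (subst sum.lessThan_Suc_shift) (simp add: cns_def)
  also have "(\<Sum>l<K. (mpow A (Suc l) ** B) *v u l) = A *v PhiK A B K u"
    unfolding PhiK_def mv_sum by (simp add: matrix_vector_mul_assoc matrix_mul_assoc)
  finally show ?thesis by simp
qed

lemma coefK_cns0: "coefK A B C D (Suc K) (cns a u) 0 = D *v a + C *v PhiK A B K u"
proof -
  have "coefK A B C D (Suc K) (cns a u) 0 = D *v a + (\<Sum>l<K. (C ** mpow A l ** B) *v u l)"
    unfolding coefK_def by (subst sum.lessThan_Suc_shift) (simp add: cns_def markov_def)
  also have "(\<Sum>l<K. (C ** mpow A l ** B) *v u l) = C *v PhiK A B K u"
    unfolding PhiK_def mv_sum by (simp add: matrix_vector_mul_assoc matrix_mul_assoc)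
  finally show ?thesis by simp
qed

lemma coefK_cnsSuc:
  assumes "bnd u K"
  shows "coefK A B C D (Suc K) (cns a u) (Suc j) = coefK A B C D K u j"
proof -
  have "coefK A B C D (Suc K) (cns a u) (Suc j) = coefK A B C D (Suc K) u j"
    unfolding coefK_def by (simp add: cns_def)
  also have "\<dots> = coefK A B C D K u j" using coefK_mono[OF assms, of "Suc K"] by simp
  finally show ?thesis .
qed

lemma cns_Uimp:
  assumes "bnd u K"
  shows "cns a u \<in> Uimp A B C D \<longleftrightarrow> u \<in> Uimp A B C D \<and> D *v a + C *v PhiK A B K u = 0"
proof -
  have "cns a u \<in> Uimp A B C D \<longleftrightarrow> (\<forall>j. coefK A B C D (Suc K) (cns a u) j = 0)"
    using Uimp_iff[OF bnd_cns[OF assms]] .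
  also have "\<dots> \<longleftrightarrow> coefK A B C D (Suc K) (cns a u) 0 = 0 \<and> (\<forall>j. coefK A B C D (Suc K) (cns a u) (Suc j) = 0)"
    by (metis not0_implies_Suc)
  also have "\<dots> \<longleftrightarrow> D *v a + C *v PhiK A B K u = 0 \<and> (\<forall>j. coefK A B C D K u j = 0)"
    by (simp only: coefK_cns0 coefK_cnsSuc[OF assms])
  also have "\<dots> \<longleftrightarrow> D *v a + C *v PhiK A B K u = 0 \<and> u \<in> Uimp A B C D"
    using Uimp_iff[OF assms, of A B C D] by simp
  finally show ?thesis by auto
qed

lemma cns_tail: "cns (u 0) (\<lambda>i. u (Suc i)) = u"
  by (auto simp: fun_eq_iff cns_def)

lemma bnd_tail: "bnd u (Suc K) \<Longrightarrow> bnd (\<lambda>i. u (Suc i)) K"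
  by (auto simp: bnd_def)

lemma zero_Uimp: "0 \<in> Uimp A B C D"
  using Uimp_iff[of 0 0] by (simp add: bnd_def coefK_def)

lemma Rseq_eq: "Rseq A B C D i = {PhiK A B i u | u. u \<in> Uimp A B C D \<and> bnd u i}"
proof (induction i)
  case 0
  have "bnd u 0 \<Longrightarrow> u = 0" for u :: "nat \<Rightarrow> real^'b" by (auto simp: bnd_def)
  then show ?case using zero_Uimp by (auto simp: PhiK_def bnd_def intro!: exI[of _ 0])
next
  case (Suc i)
  show ?case
  proof (rule set_eqI, rule iffI)
    fix x assume "x \<in> Rseq A B C D (Suc i)"
    then obtain w \<alpha> where x: "x = A *v w + B *v \<alpha>" "w \<in> Rseq A B C D i" "C *v w + D *v \<alpha> = 0" by auto
    then obtain u where u: "w = PhiK A B i u" "u \<in> Uimp A B C D" "bnd u i" using Suc by auto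
    have "cns \<alpha> u \<in> Uimp A B C D" using cns_Uimp[OF u(3), of \<alpha> A B C D] u x by (simp add: add.commute)
    moreover have "x = PhiK A B (Suc i) (cns \<alpha> u)" using PhiK_cns[of A B i \<alpha> u] x u by (simp add: add.commute)
    ultimately show "x \<in> {PhiK A B (Suc i) u | u. u \<in> Uimp A B C D \<and> bnd u (Suc i)}"
      using bnd_cns[OF u(3)] by blast
  next
    fix x assume "x \<in> {PhiK A B (Suc i) u | u. u \<in> Uimp A B C D \<and> bnd u (Suc i)}"
    then obtain u where u: "x = PhiK A B (Suc i) u" "u \<in> Uimp A B C D" "bnd u (Suc i)" by auto
    define t where "t = (\<lambda>i. u (Suc i))"
    have ut: "u = cns (u 0) t" unfolding t_def by (rule cns_tail[symmetric])
    have bt: "bnd t i" unfolding t_def using bnd_tail[OF u(3)] .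
    have "t \<in> Uimp A B C D \<and> D *v u 0 + C *v PhiK A B i t = 0"
      using cns_Uimp[OF bt, of "u 0" A B C D] u(2) ut by simp
    moreover have "x = A *v PhiK A B i t + B *v u 0" using u(1) ut PhiK_cns[of A B i "u 0" t]
      by (simp add: add.commute)
    ultimately show "x \<in> Rseq A B C D (Suc i)" using Suc bt
      by (auto simp: add.commute intro!: exI[of _ "PhiK A B i t"] exI[of _ "u 0"])
  qed
qed


lemma Uimp_bnd: "u \<in> Uimp A B C D \<Longrightarrow> \<exists>K. bnd u K"
  unfolding Uimp_def bnd_def
  by (auto simp: finite_nat_set_iff_bounded) (metis not_le)

lemma PhiK_add: "PhiK A B K (u + v) = PhiK A B K u + PhiK A B K v"
  unfolding PhiK_def by (simp add: matrix_vector_right_distrib sum.distrib)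

lemma PhiK_scale: "PhiK A B K (sscale c u) = c *\<^sub>R PhiK A B K u"
  unfolding PhiK_def sscale_def by (simp add: matrix_vector_mult_scaleR scaleR_sum_right)

lemma linear_PhiK: "Vector_Spaces.linear sscale scaleR (PhiK A B K)"
  unfolding Vector_Spaces.linear_iff using vs_sscale real_vector.vector_space_axioms PhiK_add PhiK_scale by blast

lemma coefK_add: "coefK A B C D K (u + v) j = coefK A B C D K u j + coefK A B C D K v j"
  unfolding coefK_def by (simp add: matrix_vector_right_distrib sum.distrib)

lemma coefK_scale: "coefK A B C D K (sscale c u) j = c *\<^sub>R coefK A B C D K u j"
  unfolding coefK_def sscale_def by (simp add: matrix_vector_mult_scaleR scaleR_sum_right)

lemma subspace_Uimp: "sv.subspace (Uimp A B C D)"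
  unfolding sv.subspace_def
proof (intro conjI ballI allI)
  show "0 \<in> Uimp A B C D" by (rule zero_Uimp)
next
  fix u v assume u: "u \<in> Uimp A B C D" and v: "v \<in> Uimp A B C D"
  obtain K1 K2 where k: "bnd u K1" "bnd v K2" using Uimp_bnd u v by blast
  have b1: "bnd u (max K1 K2)" "bnd v (max K1 K2)" "bnd (u + v) (max K1 K2)"
    using k by (auto simp: bnd_def)
  show "u + v \<in> Uimp A B C D"
    using Uimp_iff[OF b1(1), of A B C D] Uimp_iff[OF b1(2), of A B C D] Uimp_iff[OF b1(3), of A B C D] u v
    by (simp add: coefK_add)
next
  fix c u assume u: "u \<in> Uimp A B C D"
  obtain K where k: "bnd u K" using Uimp_bnd u by blast
  have b: "bnd (sscale c u) K" using k by (auto simp: bnd_def sscale_def)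
  show "sscale c u \<in> Uimp A B C D"
    using Uimp_iff[OF k, of A B C D] Uimp_iff[OF b, of A B C D] u by (simp add: coefK_scale)
qed

definition sh :: "nat \<Rightarrow> (nat \<Rightarrow> 'a::zero) \<Rightarrow> nat \<Rightarrow> 'a" where
  "sh k u = (\<lambda>i. if i < k then 0 else u (i - k))"

lemma sh_Suc: "sh (Suc k) u = cns 0 (sh k u)"
  by (auto simp: fun_eq_iff sh_def cns_def)

lemma sh_props:
  assumes "u \<in> Uimp A B C D" "bnd u K" "PhiK A B K u = 0"
  shows "sh k u \<in> Uimp A B C D \<and> bnd (sh k u) (K + k) \<and> PhiK A B (K + k) (sh k u) = 0"
proof (induction k)
  case 0
  have "sh 0 u = u" by (simp add: sh_def)
  then show ?case using assms by simp
next
  case (Suc k)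
  have b: "bnd (sh k u) (K + k)" using Suc by simp
  have "cns 0 (sh k u) \<in> Uimp A B C D"
    using cns_Uimp[OF b, of 0 A B C D] Suc by simp
  moreover have "PhiK A B (Suc (K + k)) (cns 0 (sh k u)) = 0"
    using PhiK_cns[of A B "K + k" 0 "sh k u"] Suc by simp
  ultimately show ?case using bnd_cns[OF b] by (simp add: sh_Suc)
qed

lemma sh_tri:
  fixes u :: "nat \<Rightarrow> real^'m" and c :: "nat \<Rightarrow> real"
  assumes "u \<noteq> 0" "(\<Sum>k<n. sscale (c k) (sh k u)) = 0" "k < n"
  shows "c k = 0"
proof (rule ccontr)
  assume ck: "c k \<noteq> 0"
  obtain p0 where "u p0 \<noteq> 0" using assms(1) by (auto simp: fun_eq_iff)
  define p where "p = (LEAST p. u p \<noteq> 0)"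
  have up: "u p \<noteq> 0" unfolding p_def by (rule LeastI) fact
  have below: "i < p \<Longrightarrow> u i = 0" for i unfolding p_def using not_less_Least by blast
  define k0 where "k0 = (LEAST k. k < n \<and> c k \<noteq> 0)"
  have k0: "k0 < n" "c k0 \<noteq> 0" unfolding k0_def using LeastI[of "\<lambda>k. k < n \<and> c k \<noteq> 0" k] assms(3) ck by auto
  have ck0: "k < k0 \<Longrightarrow> c k = 0" for k unfolding k0_def using not_less_Least k0(1) k0_def
    by (metis (mono_tags, lifting) order.strict_trans)
  have "0 = (\<Sum>k<n. sscale (c k) (sh k u)) (p + k0)" using assms(2) by simp
  also have "\<dots> = (\<Sum>k<n. c k *\<^sub>R sh k u (p + k0))" by (simp add: sum_fun_apply sscale_def)
  also have "\<dots> = c k0 *\<^sub>R sh k0 u (p + k0) + (\<Sum>k\<in>{..<n} - {k0}. c k *\<^sub>R sh k u (p + k0))"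
    using k0(1) by (subst sum.remove[of _ k0]) auto
  also have "(\<Sum>k\<in>{..<n} - {k0}. c k *\<^sub>R sh k u (p + k0)) = 0"
  proof (rule sum.neutral, rule ballI)
    fix k assume "k \<in> {..<n} - {k0}"
    then have "k < k0 \<or> k > k0" by auto
    then show "c k *\<^sub>R sh k u (p + k0) = 0"
    proof
      assume "k < k0" then show ?thesis using ck0 by simp
    next
      assume "k > k0" then show ?thesis using below by (auto simp: sh_def)
    qed
  qed
  finally have "c k0 *\<^sub>R u p = 0" by (simp add: sh_def)
  then show False using k0(2) up by simp
qed

lemma sh_inj:
  fixes u :: "nat \<Rightarrow> real^'m"
  assumes "u \<noteq> 0"
  shows "inj (\<lambda>k. sh k u)"
proof (rule injI)
  obtain p0 where "u p0 \<noteq> 0" using assms(1) by (auto simp: fun_eq_iff)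
  define p where "p = (LEAST p. u p \<noteq> 0)"
  have up: "u p \<noteq> 0" unfolding p_def by (rule LeastI) fact
  have below: "i < p \<Longrightarrow> u i = 0" for i unfolding p_def using not_less_Least by blast
  have *: "sh k u \<noteq> sh k' u" if "k < k'" for k k'
  proof
    assume "sh k u = sh k' u"
    then have "sh k u (p + k) = sh k' u (p + k)" by simp
    then show False using that below up by (auto simp: sh_def split: if_splits)
  qed
  fix k k' assume "sh k u = sh k' u"
  then show "k = k'" using *[of k k'] *[of k' k] by (metis linorder_neqE_nat)
qed

lemma Phi_inj:
  fixes A :: "real^'n^'n" and B :: "real^'m^'n"
  assumes f1: "sv.dim (Uimp A B C D) \<ge> 1"
    and u: "u \<in> Uimp A B C D" "bnd u K" "PhiK A B K u = 0"
  shows "u = 0"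
proof (rule ccontr)
  assume nz: "u \<noteq> 0"
  define n where "n = Suc (sv.dim (Uimp A B C D))"
  define S where "S = (\<lambda>k. sh k u) ` {..<n}"
  have inj: "inj_on (\<lambda>k. sh k u) {..<n}" using sh_inj[OF nz] by (simp add: inj_on_def inj_def)
  have cardS: "card S = n" unfolding S_def using card_image[OF inj] by simp
  have SU: "S \<subseteq> Uimp A B C D" unfolding S_def using sh_props[OF u] by auto
  have indep: "sv.independent S"
  proof (rule sv.independent_if_scalars_zero)
    show "finite S" unfolding S_def by simp
    fix g x assume sum0: "(\<Sum>x\<in>S. sscale (g x) x) = 0" and x: "x \<in> S"
    have "(\<Sum>k<n. sscale (g (sh k u)) (sh k u)) = 0"
      using sum0 unfolding S_def by (subst (asm) sum.reindex[OF inj]) simp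
    moreover obtain k where "k < n" "x = sh k u" using x unfolding S_def by auto
    ultimately show "g x = 0" using sh_tri[OF nz, of "\<lambda>k. g (sh k u)" n k] by simp
  qed
  obtain b where b: "b \<subseteq> Uimp A B C D" "sv.independent b" "Uimp A B C D \<subseteq> sv.span b"
    "card b = sv.dim (Uimp A B C D)"
    using sv.basis_exists by blast
  have "finite b" using b(4) f1 by (metis card_ge_0_finite less_le_trans zero_less_one)
  then have "card S \<le> card b" using sv.independent_span_bound[of b S] indep SU b(3) by auto
  then show False using cardS b(4) n_def by simp
qed


lemma PhiK_diff: "PhiK A B K (u - v) = PhiK A B K u - PhiK A B K v"
  unfolding PhiK_def by (simp add: matrix_vector_mult_diff_distrib sum_subtractf)

lemma Rseq_mono: "Rseq A B C D i \<subseteq> Rseq A B C D (Suc i)"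
proof
  fix x assume "x \<in> Rseq A B C D i"
  then obtain u where u: "x = PhiK A B i u" "u \<in> Uimp A B C D" "bnd u i"
    unfolding Rseq_eq[of A B C D i] by auto
  have "x = PhiK A B (Suc i) u" using PhiK_mono[OF u(3), of "Suc i" A B] u by simp
  then show "x \<in> Rseq A B C D (Suc i)" unfolding Rseq_eq[of A B C D "Suc i"]
    using u bnd_mono[OF u(3), of "Suc i"] by auto
qed

lemma Rseq_subspace: "subspace (Rseq A B C D i)"
proof -
  have eq: "Rseq A B C D i = PhiK A B i ` {u. u \<in> Uimp A B C D \<and> bnd u i}"
    unfolding Rseq_eq by auto
  show ?thesis unfolding eq subspace_def
  proof (intro conjI ballI allI)
    show "0 \<in> PhiK A B i ` {u \<in> Uimp A B C D. bnd u i}"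
      using zero_Uimp by (auto simp: bnd_def PhiK_def intro!: image_eqI[of _ _ 0])
  next
    fix x y assume "x \<in> PhiK A B i ` {u \<in> Uimp A B C D. bnd u i}" "y \<in> PhiK A B i ` {u \<in> Uimp A B C D. bnd u i}"
    then obtain u v where uv: "x = PhiK A B i u" "y = PhiK A B i v" "u \<in> Uimp A B C D" "v \<in> Uimp A B C D"
      "bnd u i" "bnd v i" by auto
    have "u + v \<in> Uimp A B C D" using subspace_Uimp uv sv.subspace_add by blast
    moreover have "bnd (u + v) i" using uv by (auto simp: bnd_def)
    ultimately show "x + y \<in> PhiK A B i ` {u \<in> Uimp A B C D. bnd u i}"
      using uv PhiK_add[of A B i u v] by (auto intro!: image_eqI[of _ _ "u + v"])
  next
    fix c x assume "x \<in> PhiK A B i ` {u \<in> Uimp A B C D. bnd u i}"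
    then obtain u where u: "x = PhiK A B i u" "u \<in> Uimp A B C D" "bnd u i" by auto
    have "sscale c u \<in> Uimp A B C D" using subspace_Uimp u sv.subspace_scale by blast
    moreover have "bnd (sscale c u) i" using u by (auto simp: bnd_def sscale_def)
    ultimately show "c *\<^sub>R x \<in> PhiK A B i ` {u \<in> Uimp A B C D. bnd u i}"
      using u PhiK_scale[of A B i c u] by (auto intro!: image_eqI[of _ _ "sscale c u"])
  qed
qed

lemma Rseq_stat:
  assumes "Rseq A B C D (Suc i) = Rseq A B C D i" "i \<le> j"
  shows "Rseq A B C D j = Rseq A B C D i"
  using assms(2)
proof (induction j rule: dec_induct)
  case base then show ?case by simp
next
  case (step j)
  have "Rseq A B C D (Suc j) = Rseq A B C D (Suc i)"
    by (simp only: Rseq.simps step.IH)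
  then show ?case using assms(1) by simp
qed

lemma Rseq_exists_stat: "\<exists>i. Rseq A B C D (Suc i) = Rseq A B C D i"
proof (rule ccontr)
  assume "\<not> ?thesis"
  then have ne: "Rseq A B C D (Suc i) \<noteq> Rseq A B C D i" for i by blast
  have "dim (Rseq A B C D i) \<ge> i" for i
  proof (induction i)
    case (Suc i)
    have ps: "Rseq A B C D i \<subset> Rseq A B C D (Suc i)" using Rseq_mono ne by blast
    have s1: "span (Rseq A B C D i) = Rseq A B C D i" and s2: "span (Rseq A B C D (Suc i)) = Rseq A B C D (Suc i)"
      using Rseq_subspace span_eq_iff by blast+
    have "dim (Rseq A B C D i) < dim (Rseq A B C D (Suc i))"
      using dim_psubset[of "Rseq A B C D i" "Rseq A B C D (Suc i)"] ps unfolding s1 s2 by blast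
    then show ?case using Suc by simp
  qed simp
  then have "dim (Rseq A B C D (Suc CARD('a))) \<ge> Suc CARD('a)" .
  moreover have "dim (Rseq A B C D (Suc CARD('a))) \<le> CARD('a)"
    by (rule dim_subset_UNIV_cart)
  ultimately show False by simp
qed

lemma sum1: "(\<Sum>j=1..k. g j) = (\<Sum>l<k. g (Suc l))"
  by (metis One_nat_def sum.atLeast1_atMost_eq)

lemma Mblk_mv: "Mblk A B C D k i j *v x =
   (if i + j \<le> k then 0 else markov A B C D (i + j - k - 1) *v x)"
  by (auto simp: Mblk_def markov_def diff_diff_add)

lemma row_eq:
  assumes "bnd t k" "i \<in> {1..k}"
  shows "(\<Sum>j=1..k. Mblk A B C D k i j *v (cns 0 t) j) = coefK A B C D k t (k - i)"
proof -
  define jj where "jj = k - i"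
  have jj: "jj < k" "i = k - jj" using assms(2) unfolding jj_def by auto
  have "(\<Sum>j=1..k. Mblk A B C D k i j *v (cns 0 t) j) = (\<Sum>l<k. Mblk A B C D k i (Suc l) *v t l)"
    by (subst sum1) (simp add: cns_def)
  also have "\<dots> = (\<Sum>l<k. if l < jj then 0 else markov A B C D (l - jj) *v t l)"
    by (rule sum.cong) (use jj in \<open>auto simp: Mblk_mv\<close>)
  also have "\<dots> = (\<Sum>l\<in>{jj..<k}. markov A B C D (l - jj) *v t l)"
    by (rule sum.mono_neutral_cong_right) auto
  also have "\<dots> = (\<Sum>l\<in>{0..<k - jj}. markov A B C D l *v t (l + jj))"
    using sum.shift_bounds_nat_ivl[of "\<lambda>l. markov A B C D (l - jj) *v t l" 0 jj "k - jj"] jj by simp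
  also have "\<dots> = coefK A B C D k t jj"
    unfolding coefK_def
    by (rule sum.mono_neutral_cong_left) (use assms(1) in \<open>auto simp: bnd_def add.commute\<close>)
  finally show ?thesis by (simp add: jj_def)
qed

lemma coefK_high: "bnd t k \<Longrightarrow> k \<le> j \<Longrightarrow> coefK A B C D k t j = 0"
  unfolding coefK_def bnd_def by (auto intro!: sum.neutral)

lemma kerM_iff:
  "v \<in> kerM A B C D k \<longleftrightarrow>
     v 0 = 0 \<and> bnd (\<lambda>l. v (Suc l)) k \<and> (\<lambda>l. v (Suc l)) \<in> Uimp A B C D"
proof -
  define t where "t = (\<lambda>l. v (Suc l))"
  have sup: "(\<forall>i. i \<notin> {1..k} \<longrightarrow> v i = 0) \<longleftrightarrow> v 0 = 0 \<and> bnd t k"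
  proof
    assume H: "\<forall>i. i \<notin> {1..k} \<longrightarrow> v i = 0"
    show "v 0 = 0 \<and> bnd t k" unfolding t_def bnd_def using H by auto
  next
    assume H: "v 0 = 0 \<and> bnd t k"
    show "\<forall>i. i \<notin> {1..k} \<longrightarrow> v i = 0"
    proof (intro allI impI)
      fix i assume i: "i \<notin> {1..k}"
      show "v i = 0"
      proof (cases i)
        case 0 then show ?thesis using H by simp
      next
        case (Suc i') then have "i' \<ge> k" using i by auto
        then show ?thesis using H Suc unfolding t_def bnd_def by simp
      qed
    qed
  qed
  have rows: "(\<forall>i\<in>{1..k}. (\<Sum>j=1..k. Mblk A B C D k i j *v v j) = 0) \<longleftrightarrow> t \<in> Uimp A B C D"
    if "v 0 = 0" "bnd t k"
  proof -
    have vt: "v = cns 0 t" using that unfolding t_def by (auto simp: fun_eq_iff cns_def)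
    have "(\<forall>i\<in>{1..k}. (\<Sum>j=1..k. Mblk A B C D k i j *v v j) = 0) \<longleftrightarrow>
          (\<forall>i\<in>{1..k}. coefK A B C D k t (k - i) = 0)"
      using row_eq[OF that(2), of _ A B C D] vt by simp
    also have "\<dots> \<longleftrightarrow> (\<forall>j. coefK A B C D k t j = 0)"
    proof
      assume H: "\<forall>i\<in>{1..k}. coefK A B C D k t (k - i) = 0"
      show "\<forall>j. coefK A B C D k t j = 0"
      proof
        fix j show "coefK A B C D k t j = 0"
        proof (cases "j < k")
          case True then show ?thesis using H[rule_format, of "k - j"] by auto
        next
          case False then show ?thesis using coefK_high[OF that(2), of j A B C D] by simp
        qed
      qed
    qed auto
    also have "\<dots> \<longleftrightarrow> t \<in> Uimp A B C D" using Uimp_iff[OF that(2), of A B C D] by simp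
    finally show ?thesis .
  qed
  show ?thesis unfolding kerM_def using sup rows unfolding t_def by blast
qed

lemma ctrl_eq: "ctrl A B k v = PhiK A B k (\<lambda>l. v (Suc l))"
  unfolding ctrl_def PhiK_def by (subst sum1) simp

lemma span_list:
  assumes "distinct N"
  shows "sv.span (set N) = {(\<lambda>i. \<Sum>q<length N. c q *\<^sub>R (N ! q) i) | c. True}"
proof -
  have fun_eq: "(\<lambda>i. \<Sum>q<length N. c q *\<^sub>R (N ! q) i) = (\<Sum>q<length N. sscale (c q) (N ! q))" for c
    by (simp add: fun_eq_iff sum_fun_apply sscale_def)
  have inj: "inj_on (nth N) {..<length N}" using inj_on_nth[OF assms] by simp
  have setN: "set N = nth N ` {..<length N}" by (auto simp: set_conv_nth)
  show ?thesis
  proof (rule set_eqI, rule iffI)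
    fix x assume "x \<in> sv.span (set N)"
    then obtain g where g: "x = (\<Sum>y\<in>set N. sscale (g y) y)" using sv.span_finite[of "set N"] by auto
    have "x = (\<Sum>q<length N. sscale (g (N ! q)) (N ! q))"
      unfolding g setN by (subst sum.reindex[OF inj]) simp
    then show "x \<in> {(\<lambda>i. \<Sum>q<length N. c q *\<^sub>R (N ! q) i) | c. True}"
      unfolding fun_eq by (auto intro!: exI[of _ "\<lambda>q. g (N ! q)"])
  next
    fix x assume "x \<in> {(\<lambda>i. \<Sum>q<length N. c q *\<^sub>R (N ! q) i) | c. True}"
    then obtain c where "x = (\<Sum>q<length N. sscale (c q) (N ! q))" unfolding fun_eq by blast
    moreover have "(\<Sum>q<length N. sscale (c q) (N ! q)) \<in> sv.span (set N)"
      apply (rule sv.span_sum)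
      apply (rule sv.span_scale)
      apply (rule sv.span_base)
      by simp
    ultimately show "x \<in> sv.span (set N)" by simp
  qed
qed


theorem mainTheorem4:
  fixes A :: "real^'n^'n" and B :: "real^'m^'n" and C :: "real^'n^'p" and D :: "real^'m^'p"
    and f d :: nat and N :: "(nat \<Rightarrow> real^'m) list"
  assumes d_def: "d = dim {x :: real^'m. D *v x = 0}"
    and f_def: "vector_space.dim sscale (Uimp A B C D) = f"
    and f_pos: "f \<ge> 1"
    and N_in: "set N \<subseteq> kerM A B C D (f - d + 1)"
    and N_distinct: "distinct N"
    and N_indep: "\<not> module.dependent sscale (set N)"
    and N_span: "module.span sscale (set N) = kerM A B C D (f - d + 1)"
  shows "Rs A B C D =
           {ctrl A B (f - d + 1) (\<lambda>i. \<Sum>q<length N. c q *\<^sub>R (N ! q) i) | c. True}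
         \<and> dim (Rs A B C D) = f"
proof -
  let ?U = "Uimp A B C D"
  let ?R = "Rseq A B C D"
  have f1: "sv.dim ?U \<ge> 1" using f_def f_pos by simp
  have inj0: "u = 0" if "u \<in> ?U" "bnd u K" "PhiK A B K u = 0" for u K
    using Phi_inj[OF f1 that] .
  define i0 where "i0 = (LEAST i. ?R (Suc i) = ?R i)"
  have st: "?R (Suc i0) = ?R i0" unfolding i0_def by (rule LeastI_ex[OF Rseq_exists_stat])
  have Rs: "Rs A B C D = ?R i0" by (simp add: Rs_def i0_def)
  have later: "?R j = ?R i0" if "i0 \<le> j" for j using Rseq_stat[OF st that] .
  have allb: "bnd u i0" if u: "u \<in> ?U" for u
  proof -
    obtain K where K: "bnd u K" using Uimp_bnd u by blast
    define K' where "K' = max K i0"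
    have bK': "bnd u K'" using bnd_mono[OF K] unfolding K'_def by simp
    have "PhiK A B K' u \<in> ?R K'" unfolding Rseq_eq using u bK' by blast
    then have "PhiK A B K' u \<in> ?R i0" using later[of K'] unfolding K'_def by simp
    then obtain v where v: "PhiK A B K' u = PhiK A B i0 v" "v \<in> ?U" "bnd v i0"
      unfolding Rseq_eq by blast
    have bvK': "bnd v K'" using bnd_mono[OF v(3)] unfolding K'_def by simp
    have "PhiK A B i0 v = PhiK A B K' v" using PhiK_mono[OF v(3), of K' A B] unfolding K'_def by simp
    then have "PhiK A B K' (u - v) = 0" using v(1) PhiK_diff[of A B K' u v] by simp
    moreover have "u - v \<in> ?U" using sv.subspace_diff[OF subspace_Uimp u v(2)] .
    moreover have "bnd (u - v) K'" using bK' bvK' by (auto simp: bnd_def)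
    ultimately have "u - v = 0" using inj0 by blast
    then show ?thesis using v(3) by simp
  qed
  have RsU: "?R i0 = PhiK A B i0 ` ?U" unfolding Rseq_eq using allb by blast
  have injU: "inj_on (PhiK A B i0) ?U"
  proof (rule inj_onI)
    fix x y assume xy: "x \<in> ?U" "y \<in> ?U" "PhiK A B i0 x = PhiK A B i0 y"
    have "x - y \<in> ?U" using sv.subspace_diff[OF subspace_Uimp xy(1,2)] .
    moreover have "bnd (x - y) i0" using allb[OF xy(1)] allb[OF xy(2)] by (auto simp: bnd_def)
    moreover have "PhiK A B i0 (x - y) = 0" using xy(3) PhiK_diff[of A B i0 x y] by simp
    ultimately have "x - y = 0" using inj0 by blast
    then show "x = y" by simp
  qed
  have spanU: "sv.span ?U = ?U" using subspace_Uimp sv.span_eq_iff by blast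
  interpret lf: Vector_Spaces.linear sscale "scaleR :: real \<Rightarrow> real^'n \<Rightarrow> _" "PhiK A B i0"
    by (rule linear_PhiK)
  obtain b where b: "b \<subseteq> ?U" "sv.independent b" "?U \<subseteq> sv.span b" "card b = sv.dim ?U"
    using sv.basis_exists by blast
  have spb: "sv.span b = ?U"
    using b(1,3) sv.span_mono[OF b(1)] spanU by blast
  have injb: "inj_on (PhiK A B i0) (sv.span b)" using injU spb by simp
  have indb: "\<not> module.dependent scaleR (PhiK A B i0 ` b)"
    using lf.dependent_inj_imageD[OF _ injb] b(2) by blast
  have spim: "module.span scaleR (PhiK A B i0 ` b) = PhiK A B i0 ` ?U"
    using lf.span_image[of b] spb by simp
  have "dim (PhiK A B i0 ` ?U) = card (PhiK A B i0 ` b)"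
    using dim_span_eq_card_independent[of "PhiK A B i0 ` b"] indb spim
    by (simp add: dependent_raw_def span_raw_def)
  also have "\<dots> = card b" using card_image inj_on_subset[OF injU b(1)] by blast
  finally have "dim (PhiK A B i0 ` ?U) = sv.dim ?U" using b(4) by simp
  then have dimRs: "dim (Rs A B C D) = f" using Rs RsU f_def by simp
  have i0pos: "i0 \<ge> 1"
  proof (rule ccontr)
    assume "\<not> i0 \<ge> 1"
    then have "i0 = 0" by simp
    then have "Rs A B C D = {0}" using Rs by simp
    then show False using dimRs f_pos by simp
  qed
  define KD where "KD = {x :: real^'m. D *v x = 0}"
  have R1: "?R 1 = (\<lambda>\<alpha>. B *v \<alpha>) ` KD" unfolding KD_def by auto
  have subKD: "subspace KD" unfolding KD_def
    by (auto simp: subspace_def matrix_vector_right_distrib matrix_vector_mult_scaleR)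
  have injB: "inj_on (\<lambda>\<alpha>. B *v \<alpha>) (span KD)"
  proof (rule inj_onI)
    fix a b assume ab: "a \<in> span KD" "b \<in> span KD" "B *v a = B *v b"
    define g where "g = a - b"
    have sK: "span KD = KD" using subKD span_eq_iff[of KD] by blast
    have "a \<in> KD" "b \<in> KD" using ab(1,2) unfolding sK by auto
    then have gK: "D *v g = 0" unfolding g_def KD_def
      by (simp add: matrix_vector_mult_diff_distrib)
    have Bg: "B *v g = 0" using ab(3) unfolding g_def by (simp add: matrix_vector_mult_diff_distrib)
    have b0: "bnd (0 :: nat \<Rightarrow> real^'m) 0" by (simp add: bnd_def)
    have P0: "PhiK A B 0 0 = 0" by (simp add: PhiK_def)
    have "cns g 0 \<in> ?U" using cns_Uimp[OF b0, of g A B C D] zero_Uimp[of A B C D] gK P0 by simp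
    moreover have "PhiK A B (Suc 0) (cns g 0) = 0" using PhiK_cns[of A B 0 g 0] P0 Bg by simp
    ultimately have "cns g 0 = 0" using inj0 bnd_cns[OF b0] by blast
    then have "g = 0" by (metis cns_def zero_fun_def)
    then show "a = b" unfolding g_def by simp
  qed
  have dimR1: "dim (?R 1) = d"
    unfolding R1 d_def KD_def[symmetric] by (rule dim_image_eq[OF matrix_vector_mul_linear injB])
  have grow: "d + (i - 1) \<le> dim (?R i)" if "1 \<le> i" "i \<le> i0" for i
    using that
  proof (induction i rule: dec_induct)
    case base then show ?case using dimR1 by simp
  next
    case (step i)
    have ne: "?R (Suc i) \<noteq> ?R i" using not_less_Least[of i "\<lambda>i. ?R (Suc i) = ?R i"] step
      unfolding i0_def by auto
    have ps: "?R i \<subset> ?R (Suc i)" using Rseq_mono[of A B C D i] ne by blast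
    have s1: "span (?R i) = ?R i" and s2: "span (?R (Suc i)) = ?R (Suc i)"
      using Rseq_subspace span_eq_iff by blast+
    have "dim (?R i) < dim (?R (Suc i))"
      using dim_psubset[of "?R i" "?R (Suc i)"] ps unfolding s1 s2 by blast
    then show ?case using step by simp
  qed
  have "d + (i0 - 1) \<le> f" using grow[OF i0pos order_refl] dimRs Rs by simp
  then have i0k: "i0 \<le> f - d + 1" using i0pos by linarith
  define k where "k = f - d + 1"
  have Rk: "Rs A B C D = ?R k" using later[of k] i0k Rs unfolding k_def by simp
  have Rk2: "?R k = ctrl A B k ` kerM A B C D k"
  proof (rule set_eqI, rule iffI)
    fix x assume "x \<in> ?R k"
    then obtain u where u: "x = PhiK A B k u" "u \<in> ?U" "bnd u k" unfolding Rseq_eq by blast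
    have "cns 0 u \<in> kerM A B C D k" unfolding kerM_iff using u by (simp add: cns_def)
    moreover have "ctrl A B k (cns 0 u) = x" unfolding ctrl_eq u(1) by (simp add: cns_def)
    ultimately show "x \<in> ctrl A B k ` kerM A B C D k" by blast
  next
    fix x assume "x \<in> ctrl A B k ` kerM A B C D k"
    then obtain v where v: "x = ctrl A B k v" "v \<in> kerM A B C D k" by blast
    then show "x \<in> ?R k" unfolding Rseq_eq ctrl_eq kerM_iff by blast
  qed
  have Rk3: "ctrl A B k ` kerM A B C D k =
      {ctrl A B k (\<lambda>i. \<Sum>q<length N. c q *\<^sub>R (N ! q) i) | c. True}"
  proof -
    have "kerM A B C D k = {(\<lambda>i. \<Sum>q<length N. c q *\<^sub>R (N ! q) i) | c. True}"
      using N_span span_list[OF N_distinct] unfolding k_def by simp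
    then show ?thesis by auto
  qed
  show ?thesis using Rk Rk2 Rk3 dimRs unfolding k_def by simp
qed

end
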